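(* Let $Z_t$ be a real-valued random variable with bounded density $f_{Z_t}$, let $V_t,U_t:\mathbb{R}\to\mathbb{R}$, $X_t=V_t(Z_t)^+$, $Y_t=U_t(Z_t)^+$, and let $Z_t^1,\dots,Z_t^n$ be i.i.d. copies of $Z_t$ with $\mathbf{X}_t=(X_t^i)_{i=1}^n$, $\mathbf{Y}_t=(Y_t^i)_{i=1}^n$, $X_t^i=V_t(Z_t^i)^+$, $Y_t^i=U_t(Z_t^i)^+$. Let $1\le p<\infty$ and $\eta\in(0,1]$. Then with probability at least $1-\eta$: (a) for any law-invariant exposure measure $\rho$, \[|\widehat\rho(\mathbf{X}_t)-\widehat\rho(\mathbf{Y}_t)|\le\left(\frac{\Vert f_{Z_t}\Vert_\infty}{\eta}\right)^{1/p}n^{1/p}\Vert V_t-U_t\Vert_{L^p(\mathbb{R})};\] (b) for any quantile-based exposure measure $\rho_m$ with $m$ absolutely continuous with density $f_m$, and $1/p+1/q=1$, \[|\widehat\rho_m(\mathbf{X}_t)-\widehat\rho_m(\mathbf{Y}_t)|\le\Vert f_m\Vert_{L^q(0,1)}\Vert f_{Z_t}\Vert_\infty^{1/p}\Vert V_t-U_t\Vert_{L^p(\mathbb{R})}+\sqrt[2p]{\frac{-\ln\eta}{n}}\,\Vert f_m\Vert_{L^q(0,1)}\Vert V_t-U_t\Vert_\infty.\]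
   Context: $x^+=\max\{x,0\}$. An exposure measure is a monotone, cash-additive ($\rho(X+c)=\rho(X)+c$) map from random variables on an atomless probability space to $\mathbb{R}\cup\{\infty\}$; law-invariant means $\rho(X)=\rho(F_X)$ depends only on the distribution. For a sample $\mathbf{x}=(x^i)_{i=1}^n$, $\widehat\rho(\mathbf{x})=\rho(F_{\mathbf{x}})$ with $F_{\mathbf{x}}(x)=\frac1n\sum_i\mathbb{1}_{\{x\ge x^i\}}$. The quantile function is $Q_X(u)=\inf\{x:F_X(x)\ge u\}$, and for a probability measure $m$ on $(0,1)$ the quantile-based exposure measure is $\rho_m(X)=\int_0^1Q_X(u)\,m(du)$, with empirical estimator $\widehat\rho_m(\mathbf{x})=\sum_{i=1}^nw_{n,i}x^{(i)}$, where $x^{(i)}$ is the $i$-th smallest element of the sample, $w_{n,i}=m\left(\left(\frac{i-1}{n},\frac in\right]\right)$ for $i<n$ and $w_{n,n}=m\left(\left(\frac{n-1}{n},1\right)\right)$. $\Vert\cdot\Vert_\infty$ is the supremum norm. *)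

theory Defs
  imports "HOL-Probability.Probability"
begin

definition atomless :: "'b measure \<Rightarrow> bool" where
  "atomless P \<longleftrightarrow> (\<forall>A\<in>sets P. 0 < measure P A \<longrightarrow>
      (\<exists>B\<in>sets P. B \<subseteq> A \<and> 0 < measure P B \<and> measure P B < measure P A))"

definition exposure_measure :: "'b measure \<Rightarrow> (('b \<Rightarrow> real) \<Rightarrow> ereal) \<Rightarrow> bool" where
  "exposure_measure P \<rho> \<longleftrightarrow>
     (\<forall>X\<in>borel_measurable P. \<rho> X \<noteq> -\<infinity>) \<and>
     (\<forall>X\<in>borel_measurable P. \<forall>Y\<in>borel_measurable P.
         (\<forall>\<omega>\<in>space P. X \<omega> \<le> Y \<omega>) \<longrightarrow> \<rho> X \<le> \<rho> Y) \<and>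
     (\<forall>X\<in>borel_measurable P. \<forall>c::real. \<rho> (\<lambda>\<omega>. X \<omega> + c) = \<rho> X + ereal c)"

definition law_invariant :: "'b measure \<Rightarrow> (('b \<Rightarrow> real) \<Rightarrow> ereal) \<Rightarrow> bool" where
  "law_invariant P \<rho> \<longleftrightarrow>
     (\<forall>X\<in>borel_measurable P. \<forall>Y\<in>borel_measurable P.
         distr P borel X = distr P borel Y \<longrightarrow> \<rho> X = \<rho> Y)"

definition emp_cdf :: "nat \<Rightarrow> (nat \<Rightarrow> real) \<Rightarrow> real \<Rightarrow> real" where
  "emp_cdf n x t = real (card {i. i < n \<and> x i \<le> t}) / real n"

text \<open>Empirical estimator rho(F_x): rho applied to a random variable on P with law F_x.\<close>
definition rho_hat :: "'b measure \<Rightarrow> (('b \<Rightarrow> real) \<Rightarrow> ereal) \<Rightarrow> nat \<Rightarrow> (nat \<Rightarrow> real) \<Rightarrow> ereal" where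
  "rho_hat P \<rho> n x = \<rho> (SOME W. W \<in> borel_measurable P \<and>
      (\<forall>t. measure P {\<omega>\<in>space P. W \<omega> \<le> t} = emp_cdf n x t))"

definition quantile_density :: "(real \<Rightarrow> real) \<Rightarrow> bool" where
  "quantile_density fm \<longleftrightarrow> fm \<in> borel_measurable borel \<and>
     (\<forall>u\<in>{0<..<1}. 0 \<le> fm u) \<and> set_integrable lborel {0<..<1::real} fm \<and>
     (LBINT u:{0<..<1::real}. fm u) = 1"

text \<open>i-th smallest element (1-based) of the sample x 0, ..., x (n-1).\<close>
definition order_stat :: "nat \<Rightarrow> (nat \<Rightarrow> real) \<Rightarrow> nat \<Rightarrow> real" where
  "order_stat n x i = sort (map x [0..<n]) ! (i - 1)"

definition rho_m_hat :: "(real \<Rightarrow> real) \<Rightarrow> nat \<Rightarrow> (nat \<Rightarrow> real) \<Rightarrow> real" where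
  "rho_m_hat fm n x =
     (\<Sum>i=1..n. (LBINT u=(real i - 1) / real n..real i / real n. fm u) * order_stat n x i)"

section \<open>Norms (ennreal-valued, so that infinite norms are allowed)\<close>

definition enn_powr :: "ennreal \<Rightarrow> real \<Rightarrow> ennreal" where
  "enn_powr x a = (if x = \<infinity> then \<infinity> else ennreal (enn2real x powr a))"

definition Lp_norm :: "'c measure \<Rightarrow> real \<Rightarrow> ('c \<Rightarrow> real) \<Rightarrow> ennreal" where
  "Lp_norm M p f = enn_powr (\<integral>\<^sup>+ x. ennreal (\<bar>f x\<bar> powr p) \<partial>M) (1 / p)"

definition Linf_norm_01 :: "(real \<Rightarrow> real) \<Rightarrow> ennreal" where
  "Linf_norm_01 f = Inf {c. AE u in lborel. u \<in> {0<..<1} \<longrightarrow> ennreal \<bar>f u\<bar> \<le> c}"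

definition Lq_norm_01 :: "ereal \<Rightarrow> (real \<Rightarrow> real) \<Rightarrow> ennreal" where
  "Lq_norm_01 q f = (if q = \<infinity> then Linf_norm_01 f
                     else Lp_norm (restrict_space lborel {0<..<1}) (real_of_ereal q) f)"

definition sup_norm :: "(real \<Rightarrow> real) \<Rightarrow> ennreal" where
  "sup_norm f = (SUP x. ennreal \<bar>f x\<bar>)"

end

theory Submission
  imports Defs
begin


lemma (in prob_space) atomless_small:
  assumes "atomless M" "A \<in> sets M" "0 < measure M A" "0 < e"
  shows "\<exists>B\<in>sets M. B \<subseteq> A \<and> 0 < measure M B \<and> measure M B < e"
proof -
  have *: "\<exists>B\<in>sets M. B \<subseteq> A \<and> 0 < measure M B \<and> measure M B \<le> measure M A / 2^k" for k
  proof (induction k)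
    case 0 then show ?case using assms by auto
  next
    case (Suc k)
    then obtain B where B: "B \<in> sets M" "B \<subseteq> A" "0 < measure M B" "measure M B \<le> measure M A / 2^k" by blast
    then obtain C where C: "C \<in> sets M" "C \<subseteq> B" "0 < measure M C" "measure M C < measure M B"
      using assms(1) unfolding atomless_def by blast
    show ?case
    proof (cases "measure M C \<le> measure M B / 2")
      case True then show ?thesis using B C by (intro bexI[of _ C]) auto
    next
      case False
      have "measure M (B - C) = measure M B - measure M C" using B C finite_measure_Diff by blast
      then show ?thesis using B C False by (intro bexI[of _ "B - C"]) auto
    qed
  qed
  obtain k where k: "measure M A / e < 2^k" using real_arch_pow[of 2 "measure M A / e"] by auto
  then have "measure M A < e * 2^k" using assms(4) by (simp add: divide_less_eq mult.commute[of e])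
  then have lt: "measure M A / 2^k < e" by (simp add: divide_less_eq)
  obtain B where "B\<in>sets M" "B \<subseteq> A" "0 < measure M B" "measure M B \<le> measure M A / 2^k" using *[of k] by blast
  then show ?thesis using lt by (intro bexI[of _ B]) auto
qed

lemma (in prob_space) atomless_exact:
  assumes al: "atomless M" and A: "A \<in> sets M" and t: "0 \<le> t" "t \<le> measure M A"
  shows "\<exists>B\<in>sets M. B \<subseteq> A \<and> measure M B = t"
proof -
  define S where "S B = {C. C \<in> sets M \<and> C \<subseteq> A - B \<and> measure M C \<le> t - measure M B}" for B
  define s where "s B = Sup (measure M ` S B)" for B
  define good where "good B \<longleftrightarrow> B \<in> sets M \<and> B \<subseteq> A \<and> measure M B \<le> t" for B
  have bdd: "bdd_above (measure M ` S B)" for B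
    by (rule bdd_aboveI[of _ 1]) auto
  have ex: "\<exists>C. C \<in> S B \<and> s B \<le> 2 * measure M C" if "good B" for B
  proof (cases "s B \<le> 0")
    case True
    then show ?thesis using that by (intro exI[of _ "{}"]) (auto simp: S_def good_def)
  next
    case False
    have ne: "measure M ` S B \<noteq> {}" using that by (auto simp: S_def good_def intro!: image_eqI[of _ _ "{}"])
    have "s B / 2 < s B" using False by simp
    then obtain v where "v \<in> measure M ` S B" "s B / 2 < v"
      using less_cSup_iff[OF ne bdd] unfolding s_def by blast
    then show ?thesis by auto
  qed
  define nxt where "nxt B = B \<union> (SOME C. C \<in> S B \<and> s B \<le> 2 * measure M C)" for B
  define Bs where "Bs k = (nxt ^^ k) {}" for k
  have Bs_Suc: "Bs (Suc k) = nxt (Bs k)" for k by (simp add: Bs_def)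
  have step: "good (nxt B) \<and> B \<subseteq> nxt B \<and> measure M (nxt B) \<ge> measure M B + s B / 2
      \<and> (\<forall>C\<in>S B. measure M C \<le> s B)" if "good B" for B
  proof -
    define C where "C = (SOME C. C \<in> S B \<and> s B \<le> 2 * measure M C)"
    have C: "C \<in> S B" "s B \<le> 2 * measure M C" using someI_ex[OF ex[OF that]] by (auto simp: C_def)
    have m: "measure M (nxt B) = measure M B + measure M C"
      unfolding nxt_def C_def[symmetric] using C that
      by (intro finite_measure_Union) (auto simp: S_def good_def)
    have sup: "\<forall>C\<in>S B. measure M C \<le> s B" unfolding s_def using bdd by (auto intro: cSup_upper)
    have nB: "nxt B = B \<union> C" by (simp add: nxt_def C_def)
    moreover have "good (nxt B)" using C m that unfolding nB by (auto simp: good_def S_def)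
    moreover have "B \<subseteq> nxt B" by (simp add: nB)
    moreover have "measure M (nxt B) \<ge> measure M B + s B / 2" using m C(2) by simp
    ultimately show ?thesis using sup by blast
  qed
  have goodBs: "good (Bs k)" for k
  proof (induction k)
    case 0 show ?case by (simp add: Bs_def good_def t)
  next
    case (Suc k) show ?case using step[OF Suc] by (simp add: Bs_Suc)
  qed
  have inc: "incseq Bs" by (rule incseq_SucI) (use goodBs step in \<open>auto simp: Bs_Suc\<close>)
  define B where "B = (\<Union>k. Bs k)"
  have Bsets: "B \<in> sets M" "B \<subseteq> A" using goodBs by (auto simp: B_def good_def)
  have lim: "(\<lambda>k. measure M (Bs k)) \<longlonglongrightarrow> measure M B"
    unfolding B_def using goodBs inc by (intro finite_Lim_measure_incseq) (auto simp: good_def)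
  have le: "measure M B \<le> t"
    by (rule LIMSEQ_le_const2[OF lim]) (use goodBs in \<open>auto simp: good_def\<close>)
  have monoB: "measure M (Bs k) \<le> measure M B" for k
    using Bsets by (intro finite_measure_mono) (auto simp: B_def)
  have "measure M B = t"
  proof (rule ccontr)
    assume "measure M B \<noteq> t"
    with le have lt: "measure M B < t" by simp
    have "measure M (A - B) = measure M A - measure M B" using Bsets A finite_measure_Diff by blast
    then have "0 < measure M (A - B)" using lt t by simp
    then obtain C where C: "C \<in> sets M" "C \<subseteq> A - B" "0 < measure M C" "measure M C < t - measure M B"
      using atomless_small[OF al, of "A - B" "t - measure M B"] Bsets A lt by auto
    have CS: "C \<in> S (Bs k)" for k
      using C monoB[of k] by (auto simp: S_def B_def)
    have grow: "measure M (Bs k) \<ge> real k * measure M C / 2" for k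
    proof (induction k)
      case 0 then show ?case by (simp add: Bs_def)
    next
      case (Suc k)
      have "measure M C \<le> s (Bs k)" using step[OF goodBs[of k]] CS[of k] by blast
      then show ?case using step[OF goodBs[of k]] Suc by (simp add: Bs_Suc field_simps)
    qed
    obtain k where "2 * t / measure M C < real k" using reals_Archimedean2 by blast
    then have "t < real k * measure M C / 2" using C by (simp add: field_simps)
    with grow[of k] goodBs[of k] show False by (simp add: good_def)
  qed
  with Bsets show ?thesis by blast
qed



lemma (in prob_space) atomless_partition:
  fixes k :: nat
  assumes al: "atomless M" and k: "0 < k" and A: "A \<in> sets M"
  shows "\<exists>B. (\<forall>i<k. B i \<in> sets M \<and> measure M (B i) = measure M A / k)
     \<and> disjoint_family_on B {..<k} \<and> (\<Union>i<k. B i) = A"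
  using k A
proof (induction k arbitrary: A)
  case 0 thus ?case by simp
next
  case (Suc k)
  show ?case
  proof (cases "k = 0")
    case True thus ?thesis using Suc.prems by (intro exI[of _ "\<lambda>_. A"]) (auto simp: disjoint_family_on_def)
  next
    case False
    have "0 \<le> measure M A / Suc k" "measure M A / Suc k \<le> measure M A"
      using measure_nonneg[of M A] by (auto simp: divide_le_eq algebra_simps)
    then obtain B' where B': "B' \<in> sets M" "B' \<subseteq> A" "measure M B' = measure M A / Suc k"
      using atomless_exact[OF al Suc.prems(2)] by blast
    have mD: "measure M (A - B') = measure M A - measure M A / Suc k"
      using finite_measure_Diff[OF Suc.prems(2) B'(1,2)] B'(3) by simp
    have "A - B' \<in> sets M" using B' Suc.prems by auto
    then obtain B where B: "\<forall>i<k. B i \<in> sets M \<and> measure M (B i) = measure M (A - B') / k"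
       "disjoint_family_on B {..<k}" "(\<Union>i<k. B i) = A - B'"
      using Suc.IH[of "A - B'"] False by auto
    have eq: "measure M (A - B') / k = measure M A / Suc k"
    proof -
      have "measure M A - measure M A / Suc k = measure M A * k / Suc k" by (simp add: field_simps)
      moreover have "(measure M A * k / Suc k) / k = measure M A / Suc k" using False by simp
      ultimately show ?thesis unfolding mD by simp
    qed
    define B'' where "B'' = B(k := B')"
    have sub: "i < k \<Longrightarrow> B i \<subseteq> A - B'" for i using B(3) by blast
    show ?thesis
    proof (intro exI[of _ B''] conjI allI impI)
      fix i assume "i < Suc k"
      then show "B'' i \<in> sets M" "measure M (B'' i) = measure M A / real (Suc k)"
        using B B' eq by (auto simp: B''_def less_Suc_eq)
    next
      show "disjoint_family_on B'' {..<Suc k}"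
        unfolding disjoint_family_on_def B''_def
      proof (intro ballI impI)
        fix i j assume ij: "i \<in> {..<Suc k}" "j \<in> {..<Suc k}" "i \<noteq> j"
        show "(B(k := B')) i \<inter> (B(k := B')) j = {}"
        proof (cases "i = k \<or> j = k")
          case True then show ?thesis using ij sub by (auto simp: less_Suc_eq)
        next
          case False then show ?thesis using ij B(2) by (auto simp: disjoint_family_on_def less_Suc_eq)
        qed
      qed
    next
      have "(\<Union>i<Suc k. B'' i) = (\<Union>i<k. B i) \<union> B'"
        by (auto simp: B''_def lessThan_Suc)
      then show "(\<Union>i<Suc k. B'' i) = A" using B(3) B'(2) by auto
    qed
  qed
qed

lemma (in prob_space) rho_hat_coupling:
  fixes n :: nat
  assumes al: "atomless M" and n: "0 < n" and \<rho>: "exposure_measure M \<rho>" "law_invariant M \<rho>"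
    and close: "\<forall>i<n. x i \<le> y i + r"
  shows "rho_hat M \<rho> n x \<le> rho_hat M \<rho> n y + ereal r"
proof -
  obtain B where B: "\<forall>i<n. B i \<in> sets M \<and> measure M (B i) = 1 / n"
     "disjoint_family_on B {..<n}" "(\<Union>i<n. B i) = space M"
    using atomless_partition[OF al n, of "space M"] by (auto simp: prob_space)
  define W where "W z \<omega> = (\<Sum>i<n. z i * indicator (B i) \<omega>)" for z :: "nat \<Rightarrow> real" and \<omega>
  have uniq: "\<exists>j<n. \<omega> \<in> B j \<and> W z \<omega> = z j" if om: "\<omega> \<in> space M" for \<omega> z
  proof -
    obtain j where j: "j < n" "\<omega> \<in> B j" using B(3) om by auto
    have "W z \<omega> = (\<Sum>i\<in>{j}. z i * indicator (B i) \<omega>)"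
      unfolding W_def
    proof (rule sum.mono_neutral_right)
      show "\<forall>i\<in>{..<n} - {j}. z i * indicator (B i) \<omega> = 0"
        using B(2) j by (auto simp: disjoint_family_on_def indicator_def)
    qed (use j in auto)
    then show ?thesis using j by auto
  qed
  have Wm: "W z \<in> borel_measurable M" for z
    unfolding W_def using B(1)
    by (intro borel_measurable_sum borel_measurable_times borel_measurable_const borel_measurable_indicator) auto
  have cdfW: "measure M {\<omega>\<in>space M. W z \<omega> \<le> t} = emp_cdf n z t" for z t
  proof -
    have "{\<omega>\<in>space M. W z \<omega> \<le> t} = (\<Union>i\<in>{i. i < n \<and> z i \<le> t}. B i)"
    proof (intro equalityI subsetI)
      fix \<omega> assume "\<omega> \<in> {\<omega>\<in>space M. W z \<omega> \<le> t}"
      then show "\<omega> \<in> (\<Union>i\<in>{i. i < n \<and> z i \<le> t}. B i)" using uniq[of \<omega> z] by auto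
    next
      fix \<omega> assume "\<omega> \<in> (\<Union>i\<in>{i. i < n \<and> z i \<le> t}. B i)"
      then obtain i where i: "i < n" "z i \<le> t" "\<omega> \<in> B i" by auto
      then have sp: "\<omega> \<in> space M" using B(3) by auto
      obtain j where "j < n" "\<omega> \<in> B j" "W z \<omega> = z j" using uniq[OF sp] by auto
      then have "j = i" using i B(2) by (auto simp: disjoint_family_on_def)
      then show "\<omega> \<in> {\<omega>\<in>space M. W z \<omega> \<le> t}" using sp i \<open>W z \<omega> = z j\<close> by auto
    qed
    also have "measure M \<dots> = (\<Sum>i\<in>{i. i < n \<and> z i \<le> t}. measure M (B i))"
      by (rule finite_measure_finite_Union) (use B in \<open>auto simp: disjoint_family_on_def\<close>)
    also have "\<dots> = card {i. i < n \<and> z i \<le> t} * (1 / n)"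
      using B(1) by simp
    finally show ?thesis by (simp add: emp_cdf_def)
  qed
  have some_eq: "rho_hat M \<rho> n z = \<rho> (W z)" for z
  proof -
    define S where "S = (SOME W. W \<in> borel_measurable M \<and>
      (\<forall>t. measure M {\<omega>\<in>space M. W \<omega> \<le> t} = emp_cdf n z t))"
    have S: "S \<in> borel_measurable M" "\<forall>t. measure M {\<omega>\<in>space M. S \<omega> \<le> t} = emp_cdf n z t"
      using someI_ex[of "\<lambda>W. W \<in> borel_measurable M \<and>
      (\<forall>t. measure M {\<omega>\<in>space M. W \<omega> \<le> t} = emp_cdf n z t)"] Wm cdfW unfolding S_def by blast+
    have cdfeq: "cdf (distr M borel V) t = measure M {\<omega>\<in>space M. V \<omega> \<le> t}" if "V \<in> borel_measurable M" for V t
      using that unfolding cdf_def by (subst measure_distr) (auto intro!: arg_cong[where f="measure M"])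
    have "distr M borel S = distr M borel (W z)"
      by (rule cdf_unique) (use S Wm cdfW cdfeq in auto)
    then have "\<rho> S = \<rho> (W z)" using \<rho>(2) S Wm unfolding law_invariant_def by blast
    then show ?thesis by (simp add: rho_hat_def S_def)
  qed
  have le: "\<forall>\<omega>\<in>space M. W x \<omega> \<le> W y \<omega> + r"
  proof
    fix \<omega> assume "\<omega> \<in> space M"
    then obtain j where j: "j < n" "\<omega> \<in> B j" "W x \<omega> = x j" using uniq by blast
    have "W y \<omega> = y j"
      unfolding W_def
      using B(2) j by (subst sum.remove[of _ j]) (auto simp: disjoint_family_on_def indicator_def intro!: sum.neutral)
    then show "W x \<omega> \<le> W y \<omega> + r" using j close by auto
  qed
  have mono: "\<forall>X\<in>borel_measurable M. \<forall>Y\<in>borel_measurable M. (\<forall>\<omega>\<in>space M. X \<omega> \<le> Y \<omega>) \<longrightarrow> \<rho> X \<le> \<rho> Y"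
    using \<rho>(1) unfolding exposure_measure_def by blast
  have m: "(\<lambda>\<omega>. W y \<omega> + r) \<in> borel_measurable M" using Wm by auto
  have "\<rho> (W x) \<le> \<rho> (\<lambda>\<omega>. W y \<omega> + r)"
    using mono[rule_format, OF Wm m] le by blast
  also have "\<dots> = \<rho> (W y) + ereal r"
    using \<rho>(1) Wm unfolding exposure_measure_def by auto
  finally show ?thesis by (simp add: some_eq)
qed



lemma powr_convex0:
  fixes a b t p :: real
  assumes p: "1 \<le> p" and a: "0 \<le> a" and b: "0 \<le> b" and t: "0 \<le> t" "t \<le> 1"
  shows "((1-t)*a + t*b) powr p \<le> (1-t) * a powr p + t * b powr p"
proof -
  have tp: "s powr p \<le> s" if "0 \<le> s" "s \<le> 1" for s :: real
    using powr_mono'[of 1 p s] that p by simp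
  show ?thesis
  proof (cases "a = 0 \<or> b = 0")
    case True
    then show ?thesis
    proof
      assume "a = 0"
      then have "((1-t)*a + t*b) powr p = t powr p * b powr p" using t b by (simp add: powr_mult)
      also have "\<dots> \<le> t * b powr p" using tp[of t] t by (intro mult_right_mono) auto
      finally show ?thesis using \<open>a = 0\<close> by simp
    next
      assume "b = 0"
      then have "((1-t)*a + t*b) powr p = (1-t) powr p * a powr p" using t a by (simp add: powr_mult)
      also have "\<dots> \<le> (1-t) * a powr p" using tp[of "1-t"] t by (intro mult_right_mono) auto
      finally show ?thesis using \<open>b = 0\<close> by simp
    qed
  next
    case False
    then have "a \<in> {0<..}" "b \<in> {0<..}" using a b by auto
    from convex_onD[OF powr_convex[OF p] t this] show ?thesis by simp
  qed
qed

lemma abs_powr_convex: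
  fixes p :: real assumes p: "1 \<le> p"
  shows "convex_on UNIV (\<lambda>x::real. \<bar>x\<bar> powr p)"
proof (rule convex_onI)
  fix t x y :: real assume t: "0 < t" "t < 1"
  have "\<bar>(1 - t) *\<^sub>R x + t *\<^sub>R y\<bar> \<le> \<bar>(1-t) * x\<bar> + \<bar>t * y\<bar>"
    by (simp add: abs_triangle_ineq)
  also have "\<dots> = (1-t) * \<bar>x\<bar> + t * \<bar>y\<bar>" using t by (simp add: abs_mult)
  finally have "\<bar>(1 - t) *\<^sub>R x + t *\<^sub>R y\<bar> \<le> (1-t) * \<bar>x\<bar> + t * \<bar>y\<bar>" .
  then have "\<bar>(1 - t) *\<^sub>R x + t *\<^sub>R y\<bar> powr p \<le> ((1-t) * \<bar>x\<bar> + t * \<bar>y\<bar>) powr p"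
    using p by (intro powr_mono2) auto
  also have "\<dots> \<le> (1-t) * \<bar>x\<bar> powr p + t * \<bar>y\<bar> powr p"
    using t p by (intro powr_convex0) auto
  finally show "\<bar>(1 - t) *\<^sub>R x + t *\<^sub>R y\<bar> powr p \<le> (1-t) * \<bar>x\<bar> powr p + t * \<bar>y\<bar> powr p" .
qed simp

lemma two_term:
  fixes \<phi> :: "real \<Rightarrow> real"
  assumes cv: "convex_on UNIV \<phi>" and "u \<le> m1" "m1 \<le> v" "m1 + m2 = u + v"
  shows "\<phi> m1 + \<phi> m2 \<le> \<phi> u + \<phi> v"
proof (cases "u = v")
  case True then show ?thesis using assms by simp
next
  case False
  then have uv: "u < v" using assms by simp
  define t where "t = (m1 - u) / (v - u)"
  have t: "0 \<le> t" "t \<le> 1" using assms uv by (auto simp: t_def field_simps)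
  have tv: "t * (v - u) = m1 - u" using uv by (simp add: t_def)
  have m1: "m1 = (1 - t) *\<^sub>R u + t *\<^sub>R v" using tv by (simp add: algebra_simps)
  have m2: "m2 = (1 - (1 - t)) *\<^sub>R u + (1 - t) *\<^sub>R v" using tv assms(4) by (simp add: algebra_simps)
  have "\<phi> m1 \<le> (1 - t) * \<phi> u + t * \<phi> v"
    unfolding m1 by (rule convex_onD[OF cv t]) auto
  moreover have "\<phi> m2 \<le> (1 - (1 - t)) * \<phi> u + (1 - t) * \<phi> v"
    unfolding m2 by (rule convex_onD[OF cv]) (use t in auto)
  ultimately show ?thesis by (simp add: algebra_simps)
qed

lemma sorted_list_of_multiset_add_max:
  fixes m :: "'a::linorder"
  assumes "\<forall>x\<in>#A. x \<le> m"
  shows "sorted_list_of_multiset (add_mset m A) = sorted_list_of_multiset A @ [m]"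
proof -
  obtain xs where xs: "mset xs = A" using ex_mset by blast
  have "add_mset m A = mset (xs @ [m])" using xs by simp
  then have "sorted_list_of_multiset (add_mset m A) = sort (xs @ [m])"
    by (simp only: sorted_list_of_multiset_mset)
  also have "\<dots> = sort xs @ sort [m]"
    using assms xs by (intro sort_append) auto
  finally show ?thesis by (simp flip: xs)
qed

definition SC :: "(real \<Rightarrow> real) \<Rightarrow> (real \<times> real) multiset \<Rightarrow> real" where
  "SC \<phi> M = sum_list (map (\<lambda>(a,b). \<phi> (a - b))
      (zip (sorted_list_of_multiset (image_mset fst M)) (sorted_list_of_multiset (image_mset snd M))))"

definition DC :: "(real \<Rightarrow> real) \<Rightarrow> (real \<times> real) multiset \<Rightarrow> real" where
  "DC \<phi> M = sum_mset (image_mset (\<lambda>(a,b). \<phi> (a - b)) M)"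

lemma SC_add_max:
  assumes "\<forall>z\<in>#M. fst z \<le> a" "\<forall>z\<in>#M. snd z \<le> b"
  shows "SC \<phi> (add_mset (a,b) M) = SC \<phi> M + \<phi> (a - b)"
proof -
  have 1: "sorted_list_of_multiset (image_mset fst (add_mset (a,b) M)) = sorted_list_of_multiset (image_mset fst M) @ [a]"
    unfolding image_mset_add_mset fst_conv by (rule sorted_list_of_multiset_add_max) (use assms in auto)
  have 2: "sorted_list_of_multiset (image_mset snd (add_mset (a,b) M)) = sorted_list_of_multiset (image_mset snd M) @ [b]"
    unfolding image_mset_add_mset snd_conv by (rule sorted_list_of_multiset_add_max) (use assms in auto)
  have len: "length (sorted_list_of_multiset (image_mset fst M)) = length (sorted_list_of_multiset (image_mset snd M))"
    by (metis mset_sorted_list_of_multiset size_mset size_image_mset)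
  show ?thesis unfolding SC_def 1 2 zip_append[OF len] by simp
qed

lemma rearrangement_mset:
  assumes cv: "convex_on UNIV \<phi>"
  shows "SC \<phi> M \<le> DC \<phi> M"
proof (induction "size M" arbitrary: M rule: less_induct)
  case less
  have maxcase: "SC \<phi> N \<le> DC \<phi> N" if N: "size N = size M" "(a,b) \<in># N"
     "\<forall>z\<in>#N. fst z \<le> a" "\<forall>z\<in>#N. snd z \<le> b" for N a b
  proof -
    define N' where "N' = N - {#(a,b)#}"
    have NN: "N = add_mset (a,b) N'" using N(2) by (simp add: N'_def)
    have "size N' < size M" using N(1) NN by (metis size_add_mset lessI)
    then have ih: "SC \<phi> N' \<le> DC \<phi> N'" using less by blast
    have "SC \<phi> N = SC \<phi> N' + \<phi> (a - b)"
      unfolding NN using N(3,4) NN by (intro SC_add_max) auto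
    moreover have "DC \<phi> N = DC \<phi> N' + \<phi> (a - b)" unfolding NN DC_def by simp
    ultimately show ?thesis using ih by simp
  qed
  show ?case
  proof (cases "M = {#}")
    case True then show ?thesis by (simp add: SC_def DC_def)
  next
    case False
    define a where "a = Max (fst ` set_mset M)"
    define b where "b = Max (snd ` set_mset M)"
    have fa: "\<forall>z\<in>#M. fst z \<le> a" "\<forall>z\<in>#M. snd z \<le> b" by (auto simp: a_def b_def)
    have "a \<in> fst ` set_mset M" unfolding a_def using False by (intro Max_in) auto
    then obtain \<beta> where \<beta>: "(a, \<beta>) \<in># M" by force
    have "b \<in> snd ` set_mset M" unfolding b_def using False by (intro Max_in) auto
    then obtain \<alpha> where \<alpha>: "(\<alpha>, b) \<in># M" by force
    show ?thesis
    proof (cases "(a,b) \<in># M")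
      case True then show ?thesis using maxcase fa by blast
    next
      case nab: False
      then have ne: "(a,\<beta>) \<noteq> (\<alpha>,b)" using \<beta> by auto
      define M1 where "M1 = M - {#(a,\<beta>)#}"
      define M'' where "M'' = M1 - {#(\<alpha>,b)#}"
      have mem: "(\<alpha>,b) \<in># M1" using \<alpha> ne by (auto simp: in_diff_count M1_def)
      have "M = add_mset (a,\<beta>) M1" using \<beta> by (simp add: M1_def)
      moreover have "M1 = add_mset (\<alpha>,b) M''" using mem by (simp add: M''_def)
      ultimately have MM: "M = add_mset (a,\<beta>) (add_mset (\<alpha>,b) M'')" by simp
      define M2 where "M2 = add_mset (a,b) (add_mset (\<alpha>,\<beta>) M'')"
      have f2: "image_mset fst M2 = image_mset fst M" "image_mset snd M2 = image_mset snd M"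
        by (simp_all add: M2_def MM add_mset_commute)
      have SCeq: "SC \<phi> M2 = SC \<phi> M" unfolding SC_def f2 ..
      have "\<alpha> \<le> a" "\<beta> \<le> b" using fa \<alpha> \<beta> by force+
      then have tt: "\<phi> (a - b) + \<phi> (\<alpha> - \<beta>) \<le> \<phi> (\<alpha> - b) + \<phi> (a - \<beta>)"
        by (intro two_term[OF cv]) auto
      have d1: "DC \<phi> M2 = \<phi> (a-b) + \<phi> (\<alpha>-\<beta>) + DC \<phi> M''"
        unfolding DC_def M2_def by (simp only: image_mset_add_mset sum_mset.add_mset prod.case add.assoc)
      have d2: "DC \<phi> M = \<phi> (a-\<beta>) + \<phi> (\<alpha>-b) + DC \<phi> M''"
        unfolding DC_def MM by (simp only: image_mset_add_mset sum_mset.add_mset prod.case add.assoc)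
      have "DC \<phi> M2 \<le> DC \<phi> M"
        using tt d1 d2 by linarith
      moreover have "SC \<phi> M2 \<le> DC \<phi> M2"
      proof (rule maxcase)
        show "size M2 = size M" unfolding M2_def MM by (simp only: size_add_mset)
        show "(a,b) \<in># M2" unfolding M2_def by simp
        have "set_mset M'' \<subseteq> set_mset M" unfolding MM by auto
        then have "set_mset M2 \<subseteq> set_mset M \<union> {(a,b), (\<alpha>,\<beta>)}" unfolding M2_def by auto
        then show "\<forall>z\<in>#M2. fst z \<le> a" "\<forall>z\<in>#M2. snd z \<le> b"
          using fa \<open>\<alpha> \<le> a\<close> \<open>\<beta> \<le> b\<close> by auto
      qed
      ultimately show ?thesis using SCeq by simp
    qed
  qed
qed

lemma rearrangement:
  fixes x y :: "nat \<Rightarrow> real" and p :: real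
  assumes p: "1 \<le> p"
  shows "(\<Sum>i=1..n. \<bar>order_stat n x i - order_stat n y i\<bar> powr p) \<le> (\<Sum>j<n. \<bar>x j - y j\<bar> powr p)"
proof -
  define \<phi> where "\<phi> = (\<lambda>d::real. \<bar>d\<bar> powr p)"
  define M where "M = mset (map (\<lambda>j. (x j, y j)) [0..<n])"
  have fM: "image_mset fst M = mset (map x [0..<n])" "image_mset snd M = mset (map y [0..<n])"
    by (simp_all add: M_def multiset.map_comp o_def)
  have "SC \<phi> M = sum_list (map (\<lambda>(a,b). \<phi> (a - b)) (zip (sort (map x [0..<n])) (sort (map y [0..<n]))))"
    unfolding SC_def fM sorted_list_of_multiset_mset by (rule refl)
  also have "\<dots> = (\<Sum>k<n. \<phi> (sort (map x [0..<n]) ! k - sort (map y [0..<n]) ! k))"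
    by (simp add: sum_list_sum_nth lessThan_atLeast0)
  also have "\<dots> = (\<Sum>i=1..n. \<phi> (order_stat n x i - order_stat n y i))"
    unfolding order_stat_def
    by (rule sum.reindex_bij_witness[of _ "\<lambda>i. i - 1" "\<lambda>k. k + 1"]) auto
  finally have 1: "SC \<phi> M = (\<Sum>i=1..n. \<phi> (order_stat n x i - order_stat n y i))" .
  have 2: "DC \<phi> M = (\<Sum>j<n. \<phi> (x j - y j))"
  proof -
    have "DC \<phi> M = sum_list (map (\<lambda>(a,b). \<phi> (a - b)) (map (\<lambda>j. (x j, y j)) [0..<n]))"
      unfolding DC_def M_def mset_map[symmetric] sum_mset_sum_list ..
    also have "\<dots> = sum_list (map (\<lambda>j. \<phi> (x j - y j)) [0..<n])" by (simp add: o_def)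
    also have "\<dots> = (\<Sum>j<n. \<phi> (x j - y j))" by (simp add: sum_list_sum_nth lessThan_atLeast0)
    finally show ?thesis .
  qed
  have "SC \<phi> M \<le> DC \<phi> M" using rearrangement_mset[OF abs_powr_convex[OF p], of M] by (simp only: \<phi>_def)
  then have "(\<Sum>i=1..n. \<phi> (order_stat n x i - order_stat n y i)) \<le> (\<Sum>j<n. \<phi> (x j - y j))" by (simp only: 1 2)
  then show ?thesis by (simp only: \<phi>_def)
qed



lemma enn_powr_ennreal: "0 \<le> x \<Longrightarrow> enn_powr (ennreal x) a = ennreal (x powr a)"
  by (simp add: enn_powr_def)

lemma enn_powr_top[simp]: "enn_powr top a = top"
  by (simp add: enn_powr_def)

lemma enn_powr_pos: "0 < x \<Longrightarrow> 0 < enn_powr x a"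
  by (cases x) (auto simp: enn_powr_def)

lemma enn_powr_mono: "x \<le> y \<Longrightarrow> 0 \<le> a \<Longrightarrow> enn_powr x a \<le> enn_powr y a"
proof (cases "y = top")
  case True then show ?thesis by simp
next
  case False
  assume xy: "x \<le> y" "0 \<le> a"
  then have "x \<noteq> top" using False top_unique by auto
  then show ?thesis using False xy
    by (cases x; cases y) (auto simp: enn_powr_def intro!: powr_mono2 ennreal_leI)
qed

lemma holder_nn:
  fixes f g :: "'a \<Rightarrow> real"
  assumes fm: "f \<in> borel_measurable N" and gm: "g \<in> borel_measurable N"
    and f0: "\<And>x. 0 \<le> f x" and g0: "\<And>x. 0 \<le> g x"
    and p: "1 < p" and q: "1 < q" and pq: "1/p + 1/q = 1"
  shows "(\<integral>\<^sup>+x. ennreal (f x * g x) \<partial>N)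
     \<le> enn_powr (\<integral>\<^sup>+x. ennreal (f x powr q) \<partial>N) (1/q) * enn_powr (\<integral>\<^sup>+x. ennreal (g x powr p) \<partial>N) (1/p)"
proof -
  define A where "A = (\<integral>\<^sup>+x. ennreal (f x powr q) \<partial>N)"
  define B where "B = (\<integral>\<^sup>+x. ennreal (g x powr p) \<partial>N)"
  have zeroL: "(\<integral>\<^sup>+x. ennreal (f x * g x) \<partial>N) = 0" if "A = 0 \<or> B = 0"
  proof -
    have "AE x in N. f x = 0 \<or> g x = 0"
      using that
    proof
      assume "A = 0"
      then have "AE x in N. ennreal (f x powr q) = 0" unfolding A_def
        using fm by (subst (asm) nn_integral_0_iff_AE) auto
      then show ?thesis by eventually_elim (use f0 in \<open>auto simp: ennreal_eq_0_iff\<close>)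
    next
      assume "B = 0"
      then have "AE x in N. ennreal (g x powr p) = 0" unfolding B_def
        using gm by (subst (asm) nn_integral_0_iff_AE) auto
      then show ?thesis by eventually_elim (use g0 in \<open>auto simp: ennreal_eq_0_iff\<close>)
    qed
    then have "AE x in N. ennreal (f x * g x) = 0" by eventually_elim auto
    then show ?thesis using fm gm by (subst nn_integral_0_iff_AE) auto
  qed
  show ?thesis
  proof (cases "A = 0 \<or> B = 0")
    case True then show ?thesis using zeroL by simp
  next
    case False
    then have A0: "A \<noteq> 0" and B0: "B \<noteq> 0" by auto
    show ?thesis
    proof (cases "A = \<infinity> \<or> B = \<infinity>")
      case True
      have "enn_powr A (1/q) * enn_powr B (1/p) = \<infinity>"
      proof -
        have pA: "0 < enn_powr A (1/q)" using A0 by (intro enn_powr_pos) (simp add: zero_less_iff_neq_zero)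
        have pB: "0 < enn_powr B (1/p)" using B0 by (intro enn_powr_pos) (simp add: zero_less_iff_neq_zero)
        show ?thesis using True pA pB by (auto simp: ennreal_mult_eq_top_iff)
      qed
      then show ?thesis by (simp add: A_def B_def)
    next
      case False
      then obtain a b where ab: "A = ennreal a" "B = ennreal b" "0 \<le> a" "0 \<le> b"
        by (metis ennreal_cases top.not_eq_extremum infinity_ennreal_def)
      have a0: "0 < a" "0 < b" using A0 B0 ab by auto
      define \<alpha> where "\<alpha> = a powr (1/q)"
      define \<beta> where "\<beta> = b powr (1/p)"
      have \<alpha>\<beta>: "0 < \<alpha>" "0 < \<beta>" using a0 by (auto simp: \<alpha>_def \<beta>_def)
      have \<alpha>q: "\<alpha> powr q = a" using a0 q by (simp add: \<alpha>_def powr_powr)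
      have \<beta>p: "\<beta> powr p = b" using a0 p by (simp add: \<beta>_def powr_powr)
      define c1 where "c1 = \<alpha> * \<beta> / (q * a)"
      define c2 where "c2 = \<alpha> * \<beta> / (p * b)"
      have c: "0 \<le> c1" "0 \<le> c2" using \<alpha>\<beta> a0 p q by (auto simp: c1_def c2_def)
      have pw: "f x * g x \<le> c1 * f x powr q + c2 * g x powr p" for x
      proof -
        have y: "(f x / \<alpha>) * (g x / \<beta>) \<le> (f x / \<alpha>) powr q / q + (g x / \<beta>) powr p / p"
          using Youngs_inequality[of q p "f x / \<alpha>" "g x / \<beta>"] q p pq f0 g0 \<alpha>\<beta> by (simp add: add.commute)
        have e1: "(f x / \<alpha>) powr q = f x powr q / a" using f0 \<alpha>\<beta> \<alpha>q by (simp add: powr_divide)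
        have e2: "(g x / \<beta>) powr p = g x powr p / b" using g0 \<alpha>\<beta> \<beta>p by (simp add: powr_divide)
        have "f x * g x = (\<alpha> * \<beta>) * ((f x / \<alpha>) * (g x / \<beta>))" using \<alpha>\<beta> by (simp add: field_simps)
        also have "\<dots> \<le> (\<alpha> * \<beta>) * ((f x / \<alpha>) powr q / q + (g x / \<beta>) powr p / p)"
          using y \<alpha>\<beta> by (intro mult_left_mono) auto
        also have "\<dots> = c1 * f x powr q + c2 * g x powr p"
          unfolding e1 e2 c1_def c2_def using a0 p q by (simp add: field_simps)
        finally show ?thesis .
      qed
      have "(\<integral>\<^sup>+x. ennreal (f x * g x) \<partial>N) \<le> (\<integral>\<^sup>+x. ennreal c1 * ennreal (f x powr q) + ennreal c2 * ennreal (g x powr p) \<partial>N)"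
        using pw c by (intro nn_integral_mono) (auto simp flip: ennreal_mult ennreal_plus intro!: ennreal_leI)
      also have "\<dots> = ennreal c1 * A + ennreal c2 * B"
        unfolding A_def B_def using fm gm by (subst nn_integral_add) (auto simp: nn_integral_cmult)
      also have "\<dots> = ennreal (c1 * a + c2 * b)"
        using ab c by (simp add: ennreal_mult ennreal_plus)
      also have "c1 * a + c2 * b = \<alpha> * \<beta>"
        using a0 p q pq unfolding c1_def c2_def by (simp add: field_simps)
      also have "ennreal (\<alpha> * \<beta>) = enn_powr A (1/q) * enn_powr B (1/p)"
        using ab \<alpha>\<beta> by (simp add: enn_powr_ennreal \<alpha>_def \<beta>_def ennreal_mult)
      finally show ?thesis by (simp add: A_def B_def)
    qed
  qed
qed



lemma w_bound:
  fixes fm :: "real \<Rightarrow> real" and a b :: real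
  assumes fmm: "fm \<in> borel_measurable borel" and ab: "a \<le> b"
  shows "ennreal \<bar>LBINT u=a..b. fm u\<bar> \<le> (\<integral>\<^sup>+u. ennreal (\<bar>fm u\<bar> * indicator {a<..<b} u) \<partial>lborel)"
proof -
  have eq: "(LBINT u=a..b. fm u) = integral\<^sup>L lborel (\<lambda>u. indicator {a<..<b} u *\<^sub>R fm u)"
    using ab by (simp add: interval_lebesgue_integral_def set_lebesgue_integral_def)
  have nrm: "norm (indicator {a<..<b} u *\<^sub>R fm u) = \<bar>fm u\<bar> * indicator {a<..<b} u" for u
    by (simp add: indicator_def)
  show ?thesis
  proof (cases "integrable lborel (\<lambda>u. indicator {a<..<b} u *\<^sub>R fm u)")
    case True
    from integral_norm_bound_ennreal[OF True] show ?thesis unfolding eq nrm by simp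
  next
    case False
    then show ?thesis unfolding eq by (simp add: not_integrable_integral_eq)
  qed
qed

lemma Inf_mult_bound:
  fixes L K :: ennreal and S :: "ennreal set"
  assumes "S \<noteq> {}" "K \<noteq> top" "\<And>c. c \<in> S \<Longrightarrow> L \<le> c * K"
  shows "L \<le> Inf S * K"
proof (cases "K = 0")
  case True
  obtain c where "c \<in> S" using assms(1) by auto
  then show ?thesis using assms(3)[of c] True by simp
next
  case False
  obtain k where k: "K = ennreal k" "0 < k" using assms(2) False
    by (metis ennreal_cases ennreal_zero_less_top infinity_ennreal_def not_gr_zero zero_less_iff_neq_zero ennreal_eq_0_iff le_less_linear)
  have inv: "ennreal k * ennreal (1/k) = 1" using k by (simp flip: ennreal_mult)
  have "L * ennreal (1/k) \<le> Inf S"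
  proof (rule Inf_greatest)
    fix c assume "c \<in> S"
    then have "L * ennreal (1/k) \<le> c * K * ennreal (1/k)" using assms(3) by (intro mult_right_mono) auto
    also have "\<dots> = c" using inv k by (simp add: mult.assoc)
    finally show "L * ennreal (1/k) \<le> c" .
  qed
  then have "L * ennreal (1/k) * K \<le> Inf S * K" by (intro mult_right_mono) auto
  moreover have "L * ennreal (1/k) * K = L" using inv k by (simp add: mult.assoc mult.commute[of "ennreal (1/k)"])
  ultimately show ?thesis by simp
qed



lemma qb_det:
  fixes fm :: "real \<Rightarrow> real" and x y :: "nat \<Rightarrow> real" and n :: nat and p :: real and q :: ereal
  assumes n: "0 < n" and fmm: "fm \<in> borel_measurable borel" and p: "1 \<le> p" and q: "1 \<le> q"
    and pq: "1 / ereal p + 1 / q = 1"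
  shows "ennreal \<bar>rho_m_hat fm n x - rho_m_hat fm n y\<bar>
     \<le> Lq_norm_01 q fm * ennreal (((\<Sum>j<n. \<bar>x j - y j\<bar> powr p) / n) powr (1/p))"
proof -
  define a where "a i = order_stat n x i - order_stat n y i" for i
  define w where "w i = (LBINT u=(real i - 1) / real n..real i / real n. fm u)" for i
  define I where "I i = {(real i - 1) / real n <..< real i / real n}" for i
  define F where "F u = \<bar>fm u\<bar> * indicator {0<..<1::real} u" for u
  define G where "G u = (\<Sum>i=1..n. \<bar>a i\<bar> * indicator (I i) u)" for u
  have Isub: "I i \<subseteq> {0<..<1}" if i: "i \<in> {1..n}" for i
  proof
    fix u assume "u \<in> I i"
    then have u: "(real i - 1) / n < u" "u < real i / n" by (auto simp: I_def)
    have "0 \<le> (real i - 1) / n" using i by auto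
    moreover have "real i / n \<le> 1" using i n by (simp add: divide_le_eq)
    ultimately show "u \<in> {0<..<1}" using u by auto
  qed
  have Idisj: "I i \<inter> I j = {}" if "i \<in> {1..n}" "j \<in> {1..n}" "i \<noteq> j" for i j
  proof -
    have "real i \<le> real j - 1 \<or> real j \<le> real i - 1" using that by auto
    then show ?thesis using n by (auto simp: I_def divide_right_mono field_simps)
  qed
  have Gnn: "0 \<le> G u" for u unfolding G_def by (auto intro!: sum_nonneg)
  have Fnn: "0 \<le> F u" for u unfolding F_def by auto
  have Fm: "F \<in> borel_measurable lborel" unfolding F_def using fmm by measurable
  have Gm: "G \<in> borel_measurable lborel" unfolding G_def I_def by measurable
  have Gpt: "G u powr r = (\<Sum>i=1..n. \<bar>a i\<bar> powr r * indicator (I i) u)" if r: "0 < r" for u r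
  proof (cases "\<exists>j\<in>{1..n}. u \<in> I j")
    case True
    then obtain j where j: "j \<in> {1..n}" "u \<in> I j" by auto
    have other: "i \<in> {1..n} \<Longrightarrow> i \<noteq> j \<Longrightarrow> u \<notin> I i" for i using Idisj[of i j] j by auto
    have "G u = (\<Sum>i\<in>{j}. \<bar>a i\<bar> * indicator (I i) u)"
      unfolding G_def by (rule sum.mono_neutral_right) (use j other in auto)
    moreover have "(\<Sum>i=1..n. \<bar>a i\<bar> powr r * indicator (I i) u) = (\<Sum>i\<in>{j}. \<bar>a i\<bar> powr r * indicator (I i) u)"
      by (rule sum.mono_neutral_right) (use j other in auto)
    ultimately show ?thesis using j by simp
  next
    case False
    then have "G u = 0" "(\<Sum>i=1..n. \<bar>a i\<bar> powr r * indicator (I i) u) = 0"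
      unfolding G_def by (auto intro!: sum.neutral)
    then show ?thesis by simp
  qed
  have intG: "(\<integral>\<^sup>+u. ennreal (G u powr r) \<partial>lborel) = ennreal ((\<Sum>i=1..n. \<bar>a i\<bar> powr r) / n)" if r: "0 < r" for r
  proof -
    have "(\<integral>\<^sup>+u. ennreal (G u powr r) \<partial>lborel) = (\<integral>\<^sup>+u. (\<Sum>i=1..n. ennreal (\<bar>a i\<bar> powr r) * indicator (I i) u) \<partial>lborel)"
      by (intro nn_integral_cong) (simp add: Gpt[OF r] ennreal_mult ennreal_indicator sum_nonneg)
    also have "\<dots> = (\<Sum>i=1..n. ennreal (\<bar>a i\<bar> powr r) * emeasure lborel (I i))"
      by (subst nn_integral_sum) (auto simp: I_def nn_integral_cmult)
    also have "\<dots> = (\<Sum>i=1..n. ennreal (\<bar>a i\<bar> powr r / n))"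
    proof (intro sum.cong refl)
      fix i assume "i \<in> {1..n}"
      have le: "(real i - 1) / n \<le> real i / n" using n by (simp add: divide_right_mono)
      have "real i / n - (real i - 1) / n = 1 / n" by (simp add: diff_divide_distrib[symmetric])
      then have "emeasure lborel (I i) = ennreal (1 / n)" unfolding I_def using le by simp
      then show "ennreal (\<bar>a i\<bar> powr r) * emeasure lborel (I i) = ennreal (\<bar>a i\<bar> powr r / n)"
        by (simp add: ennreal_mult[symmetric])
    qed
    also have "\<dots> = ennreal ((\<Sum>i=1..n. \<bar>a i\<bar> powr r) / n)"
      by (simp add: sum_divide_distrib)
    finally show ?thesis .
  qed
  have rearr: "(\<Sum>i=1..n. \<bar>a i\<bar> powr p) \<le> (\<Sum>j<n. \<bar>x j - y j\<bar> powr p)"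
    unfolding a_def by (rule rearrangement[OF p])
  have stepA: "ennreal \<bar>rho_m_hat fm n x - rho_m_hat fm n y\<bar> \<le> (\<integral>\<^sup>+u. ennreal (F u * G u) \<partial>lborel)"
  proof -
    have "rho_m_hat fm n x - rho_m_hat fm n y = (\<Sum>i=1..n. w i * a i)"
      unfolding rho_m_hat_def w_def a_def by (simp add: right_diff_distrib sum_subtractf)
    then have "\<bar>rho_m_hat fm n x - rho_m_hat fm n y\<bar> \<le> (\<Sum>i=1..n. \<bar>w i\<bar> * \<bar>a i\<bar>)"
      by (simp add: abs_mult[symmetric] sum_abs)
    then have "ennreal \<bar>rho_m_hat fm n x - rho_m_hat fm n y\<bar> \<le> (\<Sum>i=1..n. ennreal \<bar>a i\<bar> * ennreal \<bar>w i\<bar>)"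
      by (simp add: ennreal_mult[symmetric] mult.commute ennreal_leI)
    also have "\<dots> \<le> (\<Sum>i=1..n. ennreal \<bar>a i\<bar> * (\<integral>\<^sup>+u. ennreal (\<bar>fm u\<bar> * indicator (I i) u) \<partial>lborel))"
      unfolding w_def I_def using n
      by (intro sum_mono mult_left_mono w_bound[OF fmm]) (auto simp: divide_right_mono)
    also have "\<dots> = (\<integral>\<^sup>+u. (\<Sum>i=1..n. ennreal \<bar>a i\<bar> * ennreal (\<bar>fm u\<bar> * indicator (I i) u)) \<partial>lborel)"
      using fmm by (subst nn_integral_sum) (auto simp: I_def nn_integral_cmult)
    also have "\<dots> \<le> (\<integral>\<^sup>+u. ennreal (F u * G u) \<partial>lborel)"
    proof (intro nn_integral_mono)
      fix u
      have "(\<Sum>i=1..n. ennreal \<bar>a i\<bar> * ennreal (\<bar>fm u\<bar> * indicator (I i) u))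
          = ennreal (\<Sum>i=1..n. \<bar>a i\<bar> * (\<bar>fm u\<bar> * indicator (I i) u))"
        by (simp add: ennreal_mult[symmetric] sum_nonneg)
      also have "(\<Sum>i=1..n. \<bar>a i\<bar> * (\<bar>fm u\<bar> * indicator (I i) u)) = F u * G u"
      proof (cases "u \<in> {0<..<1}")
        case True
        have Fu: "F u = \<bar>fm u\<bar>" using True by (simp add: F_def)
        show ?thesis unfolding Fu G_def sum_distrib_left by (intro sum.cong refl) (simp add: mult_ac)
      next
        case False
        then have "u \<notin> I i" if "i \<in> {1..n}" for i using Isub[OF that] by auto
        then show ?thesis unfolding F_def G_def using False by (auto intro!: sum.neutral)
      qed
      finally show "(\<Sum>i=1..n. ennreal \<bar>a i\<bar> * ennreal (\<bar>fm u\<bar> * indicator (I i) u)) \<le> ennreal (F u * G u)"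
        by simp
    qed
    finally show ?thesis .
  qed
  have p0: "0 < p" using p by simp
  have meanle: "(\<Sum>i=1..n. \<bar>a i\<bar> powr p) / n \<le> (\<Sum>j<n. \<bar>x j - y j\<bar> powr p) / n"
    using rearr n by (simp add: divide_right_mono)
  show ?thesis
  proof (cases "q = \<infinity>")
    case True
    have "ereal (1/p) = 1" using pq True p by (simp add: one_ereal_def split: if_splits)
    then have "1/p = 1" by (simp add: one_ereal_def)
    then have p1: "p = 1" using p by (simp add: field_simps)
    define S where "S = {c. AE u in lborel. u \<in> {0<..<1} \<longrightarrow> ennreal \<bar>fm u\<bar> \<le> c}"
    have Lq: "Lq_norm_01 q fm = Inf S" using True by (simp add: Lq_norm_01_def Linf_norm_01_def S_def)
    have Gp1: "G u powr 1 = G u" for u using Gnn[of u] by simp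
    define K where "K = (\<integral>\<^sup>+u. ennreal (G u) \<partial>lborel)"
    have K: "K = ennreal ((\<Sum>i=1..n. \<bar>a i\<bar> powr 1) / n)" using intG[of 1] by (simp add: K_def abs_of_nonneg[OF Gnn])
    have "(\<integral>\<^sup>+u. ennreal (F u * G u) \<partial>lborel) \<le> Inf S * K"
    proof (rule Inf_mult_bound)
      show "S \<noteq> {}" unfolding S_def by (auto intro!: exI[of _ top])
      show "K \<noteq> top" using K by simp
    next
      fix c assume "c \<in> S"
      then have ae: "AE u in lborel. u \<in> {0<..<1} \<longrightarrow> ennreal \<bar>fm u\<bar> \<le> c" by (simp add: S_def)
      have "(\<integral>\<^sup>+u. ennreal (F u * G u) \<partial>lborel) \<le> (\<integral>\<^sup>+u. c * ennreal (G u) \<partial>lborel)"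
      proof (rule nn_integral_mono_AE)
        show "AE u in lborel. ennreal (F u * G u) \<le> c * ennreal (G u)"
          using ae
        proof eventually_elim
          case (elim u)
          show ?case
          proof (cases "u \<in> {0<..<1}")
            case True
            then have "ennreal (F u * G u) = ennreal \<bar>fm u\<bar> * ennreal (G u)"
              using Gnn[of u] by (simp add: F_def ennreal_mult)
            also have "\<dots> \<le> c * ennreal (G u)" using elim True by (intro mult_right_mono) auto
            finally show ?thesis .
          next
            case False then show ?thesis by (simp add: F_def)
          qed
        qed
      qed
      also have "\<dots> = c * K" unfolding K_def using Gm by (simp add: nn_integral_cmult)
      finally show "(\<integral>\<^sup>+u. ennreal (F u * G u) \<partial>lborel) \<le> c * K" .
    qed
    also have "\<dots> \<le> Lq_norm_01 q fm * ennreal (((\<Sum>j<n. \<bar>x j - y j\<bar> powr p) / n) powr (1/p))"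
      unfolding Lq K using meanle p1 by (intro mult_left_mono ennreal_leI) (auto intro!: divide_nonneg_nonneg sum_nonneg)
    finally show ?thesis using stepA by simp
  next
    case False
    then obtain r where qr: "q = ereal r" using q by (cases q) auto
    have r1: "1 \<le> r" using q qr by simp
    have pq': "1/p + 1/r = 1" using pq qr p r1 by (simp add: one_ereal_def)
    have p1: "1 < p" using pq' r1 p by (cases "p = 1") auto
    have r1': "1 < r" using pq' p1 r1 by (cases "r = 1") auto
    have Lq: "Lq_norm_01 q fm = enn_powr (\<integral>\<^sup>+u. ennreal (F u powr r) \<partial>lborel) (1/r)"
    proof -
      have "Lq_norm_01 q fm = enn_powr (\<integral>\<^sup>+u. ennreal (\<bar>fm u\<bar> powr r) \<partial>restrict_space lborel {0<..<1}) (1/r)"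
        using False qr by (simp add: Lq_norm_01_def Lp_norm_def)
      also have "(\<integral>\<^sup>+u. ennreal (\<bar>fm u\<bar> powr r) \<partial>restrict_space lborel {0<..<1})
          = (\<integral>\<^sup>+u. ennreal (F u powr r) \<partial>lborel)"
        by (subst nn_integral_restrict_space) (auto intro!: nn_integral_cong simp: F_def indicator_def)
      finally show ?thesis .
    qed
    have "(\<integral>\<^sup>+u. ennreal (F u * G u) \<partial>lborel)
        \<le> enn_powr (\<integral>\<^sup>+u. ennreal (F u powr r) \<partial>lborel) (1/r) * enn_powr (\<integral>\<^sup>+u. ennreal (G u powr p) \<partial>lborel) (1/p)"
      by (rule holder_nn[OF Fm Gm Fnn Gnn p1 r1']) (use pq' in simp)
    also have "\<dots> = Lq_norm_01 q fm * ennreal (((\<Sum>i=1..n. \<bar>a i\<bar> powr p) / n) powr (1/p))"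
      unfolding Lq intG[OF p0] by (subst enn_powr_ennreal) (auto intro!: divide_nonneg_nonneg sum_nonneg)
    also have "\<dots> \<le> Lq_norm_01 q fm * ennreal (((\<Sum>j<n. \<bar>x j - y j\<bar> powr p) / n) powr (1/p))"
      using meanle p0 by (intro mult_left_mono ennreal_leI powr_mono2) (auto intro!: divide_nonneg_nonneg sum_nonneg)
    finally show ?thesis using stepA by simp
  qed
qed



lemma (in prob_space) markov_event:
  fixes W :: "nat \<Rightarrow> 'a \<Rightarrow> real" and n :: nat and e \<eta> :: real
  assumes Wm: "\<And>i. i < n \<Longrightarrow> W i \<in> borel_measurable M" and W0: "\<And>i \<omega>. 0 \<le> W i \<omega>"
    and int: "\<And>i. i < n \<Longrightarrow> (\<integral>\<^sup>+\<omega>. ennreal (W i \<omega>) \<partial>M) \<le> ennreal e"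
    and n: "0 < n" and e: "0 \<le> e" and \<eta>: "0 < \<eta>"
  shows "\<exists>A\<in>events. prob A \<ge> 1 - \<eta> \<and> (\<forall>\<omega>\<in>A. \<forall>i<n. W i \<omega> \<le> n * e / \<eta>)"
proof -
  define t where "t = n * e / \<eta>"
  define A where "A = {\<omega>\<in>space M. \<forall>i<n. W i \<omega> \<le> t}"
  define C where "C i = {\<omega>\<in>space M. t < W i \<omega>}" for i
  have Csets: "i < n \<Longrightarrow> C i \<in> events" for i unfolding C_def using Wm by measurable
  have Asets: "A \<in> events" unfolding A_def using Wm by measurable
  have compl: "space M - A = (\<Union>i<n. C i)" by (auto simp: A_def C_def not_le)
  have Cb: "prob (C i) \<le> \<eta> / n" if i: "i < n" for i
  proof (cases "e = 0")
    case True
    then have "(\<integral>\<^sup>+\<omega>. ennreal (W i \<omega>) \<partial>M) = 0" using int[OF i] by simp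
    then have "AE \<omega> in M. ennreal (W i \<omega>) = 0" using Wm[OF i] by (subst (asm) nn_integral_0_iff_AE) auto
    then have "AE \<omega> in M. \<omega> \<notin> C i" by eventually_elim (use True in \<open>auto simp: C_def t_def\<close>)
    then have "prob (C i) = 0" using Csets[OF i] by (simp add: prob_eq_0)
    then show ?thesis using \<eta> by simp
  next
    case False
    then have t0: "0 < t" using e n \<eta> by (simp add: t_def)
    have "C i \<subseteq> {\<omega>\<in>space M. 1 \<le> ennreal (1/t) * ennreal (W i \<omega>)}"
    proof
      fix \<omega> assume "\<omega> \<in> C i"
      then have "\<omega> \<in> space M" "t < W i \<omega>" by (auto simp: C_def)
      then have "1 \<le> 1/t * W i \<omega>" using t0 by (simp add: field_simps)
      then show "\<omega> \<in> {\<omega>\<in>space M. 1 \<le> ennreal (1/t) * ennreal (W i \<omega>)}"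
        using \<open>\<omega> \<in> space M\<close> t0 by (simp add: ennreal_mult[symmetric] ennreal_leI[of 1, simplified])
    qed
    then have "emeasure M (C i) \<le> emeasure M {\<omega>\<in>space M. 1 \<le> ennreal (1/t) * ennreal (W i \<omega>)}"
      by (intro emeasure_mono) (use Wm[OF i] in measurable)
    also have "\<dots> \<le> ennreal (1/t) * (\<integral>\<^sup>+\<omega>. ennreal (W i \<omega>) * indicator (space M) \<omega> \<partial>M)"
      using nn_integral_Markov_inequality[of "\<lambda>\<omega>. ennreal (W i \<omega>)" "space M" M "ennreal (1/t)"] Wm[OF i]
      by (simp add: mult.commute)
    also have "(\<integral>\<^sup>+\<omega>. ennreal (W i \<omega>) * indicator (space M) \<omega> \<partial>M) = (\<integral>\<^sup>+\<omega>. ennreal (W i \<omega>) \<partial>M)"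
      by (intro nn_integral_cong) (simp add: indicator_def)
    also have "ennreal (1/t) * \<dots> \<le> ennreal (1/t) * ennreal e" using int[OF i] by (intro mult_left_mono) auto
    also have "\<dots> = ennreal ((1/t) * e)" using t0 e by (simp add: ennreal_mult[symmetric])
    also have "(1/t) * e = \<eta> / n" using t0 n \<eta> False e by (simp add: t_def field_simps)
    finally show ?thesis using Csets[OF i] \<eta> by (simp add: emeasure_eq_measure)
  qed
  have "prob (space M - A) \<le> (\<Sum>i<n. prob (C i))"
    unfolding compl by (rule finite_measure_subadditive_finite) (use Csets in auto)
  also have "\<dots> \<le> (\<Sum>i<n. \<eta> / n)" by (intro sum_mono Cb) auto
  also have "\<dots> = \<eta>" using n by simp
  finally have "prob (space M - A) \<le> \<eta>" .
  then have pA: "prob A \<ge> 1 - \<eta>" using prob_compl[OF Asets] by simp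
  have "\<forall>\<omega>\<in>A. \<forall>i<n. W i \<omega> \<le> n * e / \<eta>" by (auto simp: A_def t_def)
  then show ?thesis using Asets pA by blast
qed

lemma (in prob_space) hoeffding_event:
  fixes W :: "nat \<Rightarrow> 'a \<Rightarrow> real" and n :: nat and e \<eta> K :: real
  assumes ind: "indep_vars (\<lambda>_. borel) W {..<n}" and n: "0 < n"
    and bnd: "\<And>i \<omega>. i < n \<Longrightarrow> \<omega> \<in> space M \<Longrightarrow> 0 \<le> W i \<omega> \<and> W i \<omega> \<le> K" and K: "0 < K"
    and ex: "\<And>i. i < n \<Longrightarrow> expectation (W i) \<le> e" and \<eta>: "0 < \<eta>" "\<eta> < 1"
  shows "\<exists>A\<in>events. prob A \<ge> 1 - \<eta> \<and> (\<forall>\<omega>\<in>A. (\<Sum>i<n. W i \<omega>) / n \<le> e + K * sqrt (- ln \<eta> / (2 * n)))"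
proof -
  interpret H: Hoeffding_ineq M "{..<n}" W "\<lambda>_. 0" "\<lambda>_. K" "\<Sum>i<n. expectation (W i)"
  proof (unfold_locales)
    show "finite {..<n}" by simp
    show "indep_vars (\<lambda>_. borel) W {..<n}" by (rule ind)
  next
    fix i assume "i \<in> {..<n}"
    then show "AE x in M. W i x \<in> {0..K}" using bnd by (intro AE_I2) auto
  qed simp
  define s where "s = sqrt (- ln \<eta> / (2 * n))"
  have lnpos: "0 < - ln \<eta>" using \<eta> by simp
  have "0 \<le> - ln \<eta> / (2 * n)" using lnpos n by (intro divide_nonneg_pos) auto
  then have s0: "0 \<le> s" by (simp add: s_def)
  define \<epsilon> where "\<epsilon> = n * K * s"
  have \<epsilon>0: "0 \<le> \<epsilon>" using K s0 by (simp add: \<epsilon>_def)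
  have pos: "(\<Sum>i<n. (K - 0)\<^sup>2) > 0" using n K by simp
  have "prob {x\<in>space M. (\<Sum>i<n. W i x) \<ge> (\<Sum>i<n. expectation (W i)) + \<epsilon>} \<le> exp (-2 * \<epsilon>\<^sup>2 / (\<Sum>i<n. (K - 0)\<^sup>2))"
    by (rule H.Hoeffding_ineq_ge[OF \<epsilon>0 pos])
  also have "-2 * \<epsilon>\<^sup>2 / (\<Sum>i<n. (K - 0)\<^sup>2) = ln \<eta>"
  proof -
    have "s\<^sup>2 = - ln \<eta> / (2 * n)" unfolding s_def using \<open>0 \<le> - ln \<eta> / (2 * n)\<close> by simp
    then have h: "real n * (2 * s\<^sup>2) = - ln \<eta>" using n by (simp add: field_simps)
    have h2: "2 * (s\<^sup>2 * (real n)\<^sup>2) = real n * (- ln \<eta>)" unfolding h[symmetric] by (simp add: power2_eq_square algebra_simps)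
    then show ?thesis unfolding \<epsilon>_def using n K by (simp add: power_mult_distrib field_simps)
  qed
  also have "exp (ln \<eta>) = \<eta>" using \<eta> by simp
  finally have hb: "prob {x\<in>space M. (\<Sum>i<n. W i x) \<ge> (\<Sum>i<n. expectation (W i)) + \<epsilon>} \<le> \<eta>" .
  define A where "A = space M - {x\<in>space M. (\<Sum>i<n. W i x) \<ge> (\<Sum>i<n. expectation (W i)) + \<epsilon>}"
  have Wm: "i < n \<Longrightarrow> W i \<in> borel_measurable M" for i using ind unfolding indep_vars_def by auto
  have Bs: "{x\<in>space M. (\<Sum>i<n. W i x) \<ge> (\<Sum>i<n. expectation (W i)) + \<epsilon>} \<in> events"
    using Wm by measurable
  have Asets: "A \<in> events" unfolding A_def using Bs by auto
  have "prob A = 1 - prob {x\<in>space M. (\<Sum>i<n. W i x) \<ge> (\<Sum>i<n. expectation (W i)) + \<epsilon>}"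
    unfolding A_def by (rule prob_compl[OF Bs])
  then have pA: "prob A \<ge> 1 - \<eta>" using hb by simp
  have "(\<Sum>i<n. W i \<omega>) / n \<le> e + K * s" if "\<omega> \<in> A" for \<omega>
  proof -
    have "(\<Sum>i<n. W i \<omega>) < (\<Sum>i<n. expectation (W i)) + \<epsilon>" using that by (auto simp: A_def)
    also have "(\<Sum>i<n. expectation (W i)) \<le> (\<Sum>i<n. e)" by (intro sum_mono ex) auto
    finally have "(\<Sum>i<n. W i \<omega>) \<le> n * e + n * (K * s)" by (simp add: \<epsilon>_def)
    then show ?thesis using n by (simp add: divide_le_eq algebra_simps)
  qed
  then show ?thesis using Asets pA by (auto simp: s_def)
qed



lemma powr_subadd:
  fixes a b r :: real
  assumes r: "0 < r" "r \<le> 1" and a: "0 \<le> a" and b: "0 \<le> b"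
  shows "(a + b) powr r \<le> a powr r + b powr r"
proof (cases "a + b = 0")
  case True then show ?thesis using a b by simp
next
  case False
  then have ab: "0 < a + b" using a b by simp
  have h: "x \<le> x powr r" if "0 \<le> x" "x \<le> 1" for x :: real
    using powr_mono'[of r 1 x] that r by simp
  have "a / (a+b) + b / (a+b) \<le> (a/(a+b)) powr r + (b/(a+b)) powr r"
    using a b ab by (intro add_mono h) (auto simp: divide_le_eq)
  also have "a / (a+b) + b / (a+b) = 1" using ab by (simp add: add_divide_distrib[symmetric])
  finally have "1 \<le> (a powr r + b powr r) / (a+b) powr r"
    using a b ab by (simp add: powr_divide add_divide_distrib)
  then show ?thesis using ab by (simp add: le_divide_eq)
qed

lemma max0_diff: "\<bar>max (a::real) 0 - max b 0\<bar> \<le> \<bar>a - b\<bar>"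
  by (simp add: max_def abs_if)



theorem proposition3p2:
  fixes M :: "'a measure" and P :: "'b measure"
    and Z :: "nat \<Rightarrow> 'a \<Rightarrow> real" and fZ V U :: "real \<Rightarrow> real"
    and n :: nat and p \<eta> :: real
  assumes "prob_space M"
    and "prob_space P" and "atomless P"
    and "0 < n"
    and "prob_space.indep_vars M (\<lambda>_. borel) Z {..<n}"
    and "\<forall>i<n. distr M lborel (Z i) = density lborel (\<lambda>x. ennreal (fZ x))"
    and "fZ \<in> borel_measurable borel" and "\<forall>x. 0 \<le> fZ x" and "\<exists>B. \<forall>x. fZ x \<le> B"
    and "V \<in> borel_measurable borel" and "U \<in> borel_measurable borel"
    and "1 \<le> p" and "0 < \<eta>" and "\<eta> \<le> 1"
  shows
   "(\<exists>A\<in>sets M. measure M A \<ge> 1 - \<eta> \<and>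
      (\<forall>\<omega>\<in>A. \<forall>\<rho>. exposure_measure P \<rho> \<and> law_invariant P \<rho> \<longrightarrow>
        (let X = (\<lambda>i. max (V (Z i \<omega>)) 0); Y = (\<lambda>i. max (U (Z i \<omega>)) 0);
             R = enn2ereal (enn_powr (sup_norm fZ / ennreal \<eta>) (1 / p)
                    * enn_powr (ennreal (real n)) (1 / p) * Lp_norm lborel p (\<lambda>x. V x - U x))
         in rho_hat P \<rho> n X \<le> rho_hat P \<rho> n Y + R \<and>
            rho_hat P \<rho> n Y \<le> rho_hat P \<rho> n X + R)))
    \<and>
    (\<exists>A\<in>sets M. measure M A \<ge> 1 - \<eta> \<and>
      (\<forall>\<omega>\<in>A. \<forall>fm (q::ereal). quantile_density fm \<and> 1 \<le> q \<and> 1 / ereal p + 1 / q = 1 \<longrightarrow>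
        (let X = (\<lambda>i. max (V (Z i \<omega>)) 0); Y = (\<lambda>i. max (U (Z i \<omega>)) 0)
         in ennreal \<bar>rho_m_hat fm n X - rho_m_hat fm n Y\<bar>
            \<le> Lq_norm_01 q fm * enn_powr (sup_norm fZ) (1 / p) * Lp_norm lborel p (\<lambda>x. V x - U x)
              + ennreal ((- ln \<eta> / real n) powr (1 / (2 * p)))
                  * Lq_norm_01 q fm * sup_norm (\<lambda>x. V x - U x))))"
proof -
  interpret M: prob_space M by (rule assms(1))
  interpret P: prob_space P by (rule assms(2))
  note n = assms(4) and p = assms(12) and \<eta>0 = assms(13) and \<eta>1 = assms(14)
  have p0: "0 < p" using p by simp
  define D where "D x = V x - U x" for x
  have Dm: "D \<in> borel_measurable borel" unfolding D_def using assms(10,11) by measurable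
  have Zm: "Z i \<in> borel_measurable M" if "i < n" for i
    using assms(5) that unfolding M.indep_vars_def by auto
  have Zm': "Z i \<in> measurable M lborel" if "i < n" for i
    using Zm[OF that] by (simp add: measurable_lborel1)
  define S where "S = sup_norm fZ"
  obtain B where B: "\<And>x. fZ x \<le> B" using assms(9) by blast
  have Bx: "\<bar>fZ x\<bar> \<le> max B 0" for x using B[of x] assms(8) by (simp add: le_max_iff_disj)
  have Sle: "S \<le> ennreal (max B 0)"
    unfolding S_def sup_norm_def using Bx by (intro SUP_least ennreal_leI) auto
  then have Stop: "S \<noteq> top" using ennreal_less_top[of "max B 0"] by (metis le_less_trans less_irrefl)
  define s where "s = enn2real S"
  have Ss: "S = ennreal s" using Stop by (simp add: s_def ennreal_enn2real less_top)
  have s0: "0 \<le> s" by (simp add: s_def)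
  have fZs: "fZ x \<le> s" for x
  proof -
    have "ennreal \<bar>fZ x\<bar> \<le> S" unfolding S_def sup_norm_def by (rule SUP_upper) auto
    then show ?thesis using assms(8)[rule_format, of x] s0 unfolding Ss by simp
  qed
  have spos: "0 < s"
  proof (rule ccontr)
    assume "\<not> 0 < s"
    then have "\<And>x. fZ x = 0" using fZs assms(8) by (meson antisym not_less order_trans)
    then have z: "(\<lambda>x. ennreal (fZ x)) = (\<lambda>x. 0)" by simp
    have "emeasure (distr M lborel (Z 0)) UNIV = emeasure (density lborel (\<lambda>x. ennreal (fZ x))) UNIV"
      using assms(6) n by simp
    also have "\<dots> = 0" unfolding z by (simp add: emeasure_density)
    finally have "emeasure (distr M lborel (Z 0)) UNIV = 0" .
    moreover have "emeasure (distr M lborel (Z 0)) UNIV = 1"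
      using Zm'[OF n] by (subst emeasure_distr) (auto simp: M.emeasure_space_1 space_lborel)
    ultimately show False by simp
  qed
  define L where "L = (\<integral>\<^sup>+x. ennreal (\<bar>D x\<bar> powr p) \<partial>lborel)"
  have LpL: "Lp_norm lborel p (\<lambda>x. V x - U x) = enn_powr L (1/p)"
    by (simp add: Lp_norm_def L_def D_def)
  define W where "W i \<omega> = \<bar>D (Z i \<omega>)\<bar> powr p" for i \<omega>
  have Wm: "W i \<in> borel_measurable M" if "i < n" for i
    unfolding W_def using Zm[OF that] Dm by measurable
  have W0: "0 \<le> W i \<omega>" for i \<omega> by (simp add: W_def)
  have intW: "(\<integral>\<^sup>+\<omega>. ennreal (W i \<omega>) \<partial>M) \<le> ennreal s * L" if i: "i < n" for i
  proof -
    have "(\<integral>\<^sup>+\<omega>. ennreal (W i \<omega>) \<partial>M) = (\<integral>\<^sup>+x. ennreal (\<bar>D x\<bar> powr p) \<partial>distr M lborel (Z i))"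
      unfolding W_def using Zm'[OF i] Dm by (subst nn_integral_distr) auto
    also have "\<dots> = (\<integral>\<^sup>+x. ennreal (fZ x) * ennreal (\<bar>D x\<bar> powr p) \<partial>lborel)"
      using assms(6) i assms(7) Dm by (simp add: nn_integral_density)
    also have "\<dots> \<le> (\<integral>\<^sup>+x. ennreal s * ennreal (\<bar>D x\<bar> powr p) \<partial>lborel)"
      using fZs by (intro nn_integral_mono mult_right_mono ennreal_leI) auto
    also have "\<dots> = ennreal s * L" unfolding L_def using Dm by (simp add: nn_integral_cmult)
    finally show ?thesis .
  qed
  have XYD: "\<bar>max (V (Z i \<omega>)) 0 - max (U (Z i \<omega>)) 0\<bar> \<le> \<bar>D (Z i \<omega>)\<bar>" for i \<omega>
    unfolding D_def by (rule max0_diff)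
  show ?thesis
  proof (cases "\<eta> = 1")
    case True
    then show ?thesis by (intro conjI bexI[of _ "{}"]) auto
  next
    case False
    then have \<eta>1: "\<eta> < 1" using \<eta>1 by simp
    show ?thesis
    proof
      show "\<exists>A\<in>sets M. measure M A \<ge> 1 - \<eta> \<and>
      (\<forall>\<omega>\<in>A. \<forall>\<rho>. exposure_measure P \<rho> \<and> law_invariant P \<rho> \<longrightarrow>
        (let X = (\<lambda>i. max (V (Z i \<omega>)) 0); Y = (\<lambda>i. max (U (Z i \<omega>)) 0);
             R = enn2ereal (enn_powr (sup_norm fZ / ennreal \<eta>) (1 / p)
                    * enn_powr (ennreal (real n)) (1 / p) * Lp_norm lborel p (\<lambda>x. V x - U x))
         in rho_hat P \<rho> n X \<le> rho_hat P \<rho> n Y + R \<and>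
            rho_hat P \<rho> n Y \<le> rho_hat P \<rho> n X + R))"
      proof (cases "L = top")
        case True
        have a: "0 < enn_powr (sup_norm fZ / ennreal \<eta>) (1/p)"
        proof -
          have "sup_norm fZ / ennreal \<eta> = ennreal (s/\<eta>)" using s0 \<eta>0 by (simp add: S_def[symmetric] Ss divide_ennreal)
          then show ?thesis using spos \<eta>0 by (simp add: enn_powr_ennreal)
        qed
        have b: "0 < enn_powr (ennreal (real n)) (1/p)" using n by (simp add: enn_powr_ennreal)
        have R: "enn_powr (sup_norm fZ / ennreal \<eta>) (1 / p) * enn_powr (ennreal (real n)) (1 / p)
            * Lp_norm lborel p (\<lambda>x. V x - U x) = top"
          using a b True by (simp add: LpL ennreal_mult_eq_top_iff) (metis less_numeral_extra(3))
        have "\<forall>\<omega>\<in>space M. \<forall>\<rho>. exposure_measure P \<rho> \<and> law_invariant P \<rho> \<longrightarrow>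
        (let X = (\<lambda>i. max (V (Z i \<omega>)) 0); Y = (\<lambda>i. max (U (Z i \<omega>)) 0);
             R = enn2ereal (enn_powr (sup_norm fZ / ennreal \<eta>) (1 / p)
                    * enn_powr (ennreal (real n)) (1 / p) * Lp_norm lborel p (\<lambda>x. V x - U x))
         in rho_hat P \<rho> n X \<le> rho_hat P \<rho> n Y + R \<and>
            rho_hat P \<rho> n Y \<le> rho_hat P \<rho> n X + R)"
          unfolding Let_def R by simp
        then show ?thesis using M.prob_space \<eta>0 by (intro bexI[of _ "space M"]) auto
      next
        case False
        then obtain l where Ll: "L = ennreal l" "0 \<le> l" by (cases L) auto
        have int: "(\<integral>\<^sup>+\<omega>. ennreal (W i \<omega>) \<partial>M) \<le> ennreal (s * l)" if "i < n" for i
          using intW[OF that] Ll s0 by (simp add: ennreal_mult)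
        obtain A where A: "A \<in> sets M" "measure M A \<ge> 1 - \<eta>" "\<forall>\<omega>\<in>A. \<forall>i<n. W i \<omega> \<le> real n * (s * l) / \<eta>"
          using M.markov_event[where W=W and n=n and e="s * l" and \<eta>=\<eta>, OF Wm W0 int n _ \<eta>0] s0 Ll by auto
        define r where "r = ((s/\<eta>) * n * l) powr (1/p)"
        have r0: "0 \<le> r" by (simp add: r_def)
        have Dr: "\<bar>D (Z i \<omega>)\<bar> \<le> r" if "\<omega> \<in> A" "i < n" for \<omega> i
        proof -
          have "\<bar>D (Z i \<omega>)\<bar> = (\<bar>D (Z i \<omega>)\<bar> powr p) powr (1/p)" using p0 by (simp add: powr_powr)
          also have "\<dots> \<le> (real n * (s * l) / \<eta>) powr (1/p)"
            using A(3) that p0 by (intro powr_mono2) (auto simp: W_def)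
          also have "real n * (s * l) / \<eta> = (s/\<eta>) * n * l" by simp
          finally show ?thesis by (simp add: r_def)
        qed
        have R: "enn2ereal (enn_powr (sup_norm fZ / ennreal \<eta>) (1 / p) * enn_powr (ennreal (real n)) (1 / p)
            * Lp_norm lborel p (\<lambda>x. V x - U x)) = ereal r"
        proof -
          have "sup_norm fZ / ennreal \<eta> = ennreal (s/\<eta>)" using s0 \<eta>0 by (simp add: S_def[symmetric] Ss divide_ennreal)
          then have "enn_powr (sup_norm fZ / ennreal \<eta>) (1 / p) * enn_powr (ennreal (real n)) (1 / p)
            * Lp_norm lborel p (\<lambda>x. V x - U x) = ennreal ((s/\<eta>) powr (1/p) * real n powr (1/p) * l powr (1/p))"
            using s0 \<eta>0 Ll by (simp add: LpL enn_powr_ennreal ennreal_mult)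
          also have "(s/\<eta>) powr (1/p) * real n powr (1/p) * l powr (1/p) = r"
          proof -
            have "((s/\<eta>) * real n * l) powr (1/p) = ((s/\<eta>) * real n) powr (1/p) * l powr (1/p)"
              by (rule powr_mult; use s0 \<eta>0 Ll in auto)
            also have "((s/\<eta>) * real n) powr (1/p) = (s/\<eta>) powr (1/p) * real n powr (1/p)"
              by (rule powr_mult; use s0 \<eta>0 in auto)
            finally show ?thesis by (simp add: r_def)
          qed
          finally show ?thesis using r0 by simp
        qed
        have "\<forall>\<omega>\<in>A. \<forall>\<rho>. exposure_measure P \<rho> \<and> law_invariant P \<rho> \<longrightarrow>
        (let X = (\<lambda>i. max (V (Z i \<omega>)) 0); Y = (\<lambda>i. max (U (Z i \<omega>)) 0);
             R = enn2ereal (enn_powr (sup_norm fZ / ennreal \<eta>) (1 / p)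
                    * enn_powr (ennreal (real n)) (1 / p) * Lp_norm lborel p (\<lambda>x. V x - U x))
         in rho_hat P \<rho> n X \<le> rho_hat P \<rho> n Y + R \<and>
            rho_hat P \<rho> n Y \<le> rho_hat P \<rho> n X + R)"
        proof (intro ballI allI impI)
          fix \<omega> \<rho> assume \<omega>: "\<omega> \<in> A" and \<rho>: "exposure_measure P \<rho> \<and> law_invariant P \<rho>"
          have cl: "\<bar>max (V (Z i \<omega>)) 0 - max (U (Z i \<omega>)) 0\<bar> \<le> r" if "i < n" for i
            using XYD[of i \<omega>] Dr[OF \<omega> that] by linarith
          have c1: "\<forall>i<n. max (V (Z i \<omega>)) 0 \<le> max (U (Z i \<omega>)) 0 + r"
          proof (intro allI impI)
            fix i assume "i < n"
            then show "max (V (Z i \<omega>)) 0 \<le> max (U (Z i \<omega>)) 0 + r"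
              using cl[OF \<open>i < n\<close>] unfolding abs_le_iff by linarith
          qed
          have c2: "\<forall>i<n. max (U (Z i \<omega>)) 0 \<le> max (V (Z i \<omega>)) 0 + r"
          proof (intro allI impI)
            fix i assume "i < n"
            then show "max (U (Z i \<omega>)) 0 \<le> max (V (Z i \<omega>)) 0 + r"
              using cl[OF \<open>i < n\<close>] unfolding abs_le_iff by linarith
          qed
          show "let X = (\<lambda>i. max (V (Z i \<omega>)) 0); Y = (\<lambda>i. max (U (Z i \<omega>)) 0);
             R = enn2ereal (enn_powr (sup_norm fZ / ennreal \<eta>) (1 / p)
                    * enn_powr (ennreal (real n)) (1 / p) * Lp_norm lborel p (\<lambda>x. V x - U x))
            in rho_hat P \<rho> n X \<le> rho_hat P \<rho> n Y + R \<and> rho_hat P \<rho> n Y \<le> rho_hat P \<rho> n X + R"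
            unfolding Let_def R
            using P.rho_hat_coupling[OF assms(3) n _ _ c1] P.rho_hat_coupling[OF assms(3) n _ _ c2] \<rho>
            by blast
        qed
        then show ?thesis using A by blast
      qed
    next
      show "\<exists>A\<in>sets M. measure M A \<ge> 1 - \<eta> \<and>
      (\<forall>\<omega>\<in>A. \<forall>fm (q::ereal). quantile_density fm \<and> 1 \<le> q \<and> 1 / ereal p + 1 / q = 1 \<longrightarrow>
        (let X = (\<lambda>i. max (V (Z i \<omega>)) 0); Y = (\<lambda>i. max (U (Z i \<omega>)) 0)
         in ennreal \<bar>rho_m_hat fm n X - rho_m_hat fm n Y\<bar>
            \<le> Lq_norm_01 q fm * enn_powr (sup_norm fZ) (1 / p) * Lp_norm lborel p (\<lambda>x. V x - U x)
              + ennreal ((- ln \<eta> / real n) powr (1 / (2 * p)))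
                  * Lq_norm_01 q fm * sup_norm (\<lambda>x. V x - U x)))"
      proof -
        define c where "c = (- ln \<eta> / real n) powr (1 / (2 * p))"
        define K where "K = sup_norm (\<lambda>x. V x - U x)"
        define T where "T = enn_powr S (1/p) * Lp_norm lborel p (\<lambda>x. V x - U x) + ennreal c * K"
        define mean where "mean \<omega> = (\<Sum>j<n. \<bar>max (V (Z j \<omega>)) 0 - max (U (Z j \<omega>)) 0\<bar> powr p) / n" for \<omega>
        have mean0: "0 \<le> mean \<omega>" for \<omega> unfolding mean_def by (auto intro!: sum_nonneg divide_nonneg_nonneg)
        have meanW: "mean \<omega> \<le> (\<Sum>j<n. W j \<omega>) / n" for \<omega>
          unfolding mean_def W_def using XYD
          by (intro divide_right_mono sum_mono powr_mono2) (auto simp: less_imp_le[OF p0])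
        have lnpos: "0 < - ln \<eta>" using \<eta>0 \<eta>1 by simp
        have cpos: "0 < c" unfolding c_def using lnpos n by simp
        have key: "\<exists>A\<in>sets M. measure M A \<ge> 1 - \<eta> \<and> (\<forall>\<omega>\<in>A. ennreal (mean \<omega> powr (1/p)) \<le> T)"
        proof (cases "T = top")
          case True
          then show ?thesis using M.prob_space \<eta>0 by (intro bexI[of _ "space M"]) auto
        next
          case False
          have Sp: "0 < enn_powr S (1/p)" using spos by (simp add: Ss enn_powr_ennreal)
          have Ltop: "L \<noteq> top"
          proof
            assume "L = top"
            then have "enn_powr S (1/p) * Lp_norm lborel p (\<lambda>x. V x - U x) = top"
              using Sp by (simp add: LpL ennreal_mult_eq_top_iff)
            then show False using False by (simp add: T_def)
          qed
          then obtain l where Ll: "L = ennreal l" "0 \<le> l" by (cases L) auto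
          have Ktop: "K \<noteq> top"
          proof
            assume "K = top"
            then have "ennreal c * K = top" using cpos by (simp add: ennreal_mult_eq_top_iff)
            then show False using False by (simp add: T_def)
          qed
          then obtain k where Kk: "K = ennreal k" "0 \<le> k" by (cases K) auto
          have Dk: "\<bar>D x\<bar> \<le> k" for x
          proof -
            have "ennreal \<bar>D x\<bar> \<le> K" unfolding K_def sup_norm_def D_def by (rule SUP_upper) auto
            then show ?thesis using Kk by simp
          qed
          have Tval: "T = ennreal (s powr (1/p) * l powr (1/p) + c * k)"
            unfolding T_def using s0 Ll Kk cpos
            by (simp add: Ss LpL enn_powr_ennreal ennreal_mult ennreal_plus)
          show ?thesis
          proof (cases "k = 0")
            case True
            then have "D x = 0" for x using Dk[of x] by simp
            then have "mean \<omega> = 0" for \<omega> using meanW[of \<omega>] mean0[of \<omega>] p0 by (simp add: W_def)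
            then show ?thesis using M.prob_space \<eta>0 p0 by (intro bexI[of _ "space M"]) auto
          next
            case False
            then have kpos: "0 < k" using Kk by simp
            have ind: "M.indep_vars (\<lambda>_. borel) W {..<n}"
              unfolding W_def
              by (rule M.indep_vars_compose2[OF assms(5), where Y="\<lambda>_ z. \<bar>D z\<bar> powr p", simplified])
                 (use Dm in measurable)
            have bnd: "0 \<le> W i \<omega> \<and> W i \<omega> \<le> k powr p" for i \<omega>
              unfolding W_def using Dk p0 by (auto intro!: powr_mono2)
            have ex: "M.expectation (W i) \<le> s * l" if i: "i < n" for i
            proof -
              have nnb: "(\<integral>\<^sup>+\<omega>. ennreal (W i \<omega>) \<partial>M) \<le> ennreal (s * l)"
                using intW[OF i] Ll s0 by (simp add: ennreal_mult)
              have intg: "integrable M (W i)"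
                by (rule integrableI_bounded[OF Wm[OF i]]) (use nnb W0 in \<open>auto simp: less_top[symmetric] top_unique intro: le_less_trans\<close>)
              have "ennreal (M.expectation (W i)) = (\<integral>\<^sup>+\<omega>. ennreal (W i \<omega>) \<partial>M)"
                by (rule nn_integral_eq_integral[symmetric, OF intg]) (simp add: W0)
              then have "ennreal (M.expectation (W i)) \<le> ennreal (s * l)" using nnb by simp
              then show ?thesis using s0 Ll by (simp add: ennreal_le_iff)
            qed
            obtain A where A: "A \<in> sets M" "measure M A \<ge> 1 - \<eta>"
              "\<forall>\<omega>\<in>A. (\<Sum>i<n. W i \<omega>) / n \<le> s * l + k powr p * sqrt (- ln \<eta> / (2 * n))"
              using M.hoeffding_event[where W=W and n=n and K="k powr p" and e="s * l" and \<eta>=\<eta>,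
                  OF ind n bnd _ ex \<eta>0 \<eta>1] kpos by auto
            define v where "v = - ln \<eta> / (2 * n)"
            have v0: "0 \<le> v" unfolding v_def using lnpos n by (intro divide_nonneg_pos) auto
            define t where "t = k powr p * sqrt v"
            have t0: "0 \<le> t" using v0 by (simp add: t_def)
            have tp: "t powr (1/p) \<le> c * k"
            proof -
              have "t powr (1/p) = (k powr p) powr (1/p) * (sqrt v) powr (1/p)"
                unfolding t_def by (rule powr_mult; use v0 in auto)
              also have "(k powr p) powr (1/p) = k" using kpos p0 by (simp add: powr_powr)
              also have "(sqrt v) powr (1/p) = v powr (1 / (2 * p))"
                using v0 by (simp add: powr_half_sqrt[symmetric] powr_powr)
              also have "v powr (1 / (2 * p)) \<le> c"
                unfolding c_def v_def using lnpos n p0 by (intro powr_mono2) (auto simp: divide_le_eq field_simps)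
              finally show ?thesis using kpos by (simp add: mult.commute)
            qed
            have "ennreal (mean \<omega> powr (1/p)) \<le> T" if "\<omega> \<in> A" for \<omega>
            proof -
              have "mean \<omega> \<le> s * l + t"
                using order_trans[OF meanW[of \<omega>] A(3)[rule_format, OF that]] by (simp add: t_def v_def)
              then have "mean \<omega> powr (1/p) \<le> (s * l + t) powr (1/p)"
                using mean0 p0 by (intro powr_mono2) auto
              also have "\<dots> \<le> (s * l) powr (1/p) + t powr (1/p)"
                using p s0 Ll t0 by (intro powr_subadd) auto
              also have "(s * l) powr (1/p) = s powr (1/p) * l powr (1/p)"
                by (rule powr_mult; use s0 Ll in auto)
              finally have "mean \<omega> powr (1/p) \<le> s powr (1/p) * l powr (1/p) + c * k" using tp by linarith
              then show ?thesis unfolding Tval by (intro ennreal_leI)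
            qed
            then show ?thesis using A by blast
          qed
        qed
        then obtain A where A: "A \<in> sets M" "measure M A \<ge> 1 - \<eta>" "\<forall>\<omega>\<in>A. ennreal (mean \<omega> powr (1/p)) \<le> T"
          by blast
        have "\<forall>\<omega>\<in>A. \<forall>fm (q::ereal). quantile_density fm \<and> 1 \<le> q \<and> 1 / ereal p + 1 / q = 1 \<longrightarrow>
          (let X = (\<lambda>i. max (V (Z i \<omega>)) 0); Y = (\<lambda>i. max (U (Z i \<omega>)) 0)
           in ennreal \<bar>rho_m_hat fm n X - rho_m_hat fm n Y\<bar>
              \<le> Lq_norm_01 q fm * enn_powr (sup_norm fZ) (1 / p) * Lp_norm lborel p (\<lambda>x. V x - U x)
                + ennreal ((- ln \<eta> / real n) powr (1 / (2 * p)))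
                    * Lq_norm_01 q fm * sup_norm (\<lambda>x. V x - U x))"
        proof (intro ballI allI impI)
          fix \<omega> fm and q :: ereal
          assume \<omega>: "\<omega> \<in> A" and fq: "quantile_density fm \<and> 1 \<le> q \<and> 1 / ereal p + 1 / q = 1"
          have fmm: "fm \<in> borel_measurable borel" using fq by (simp add: quantile_density_def)
          have "ennreal \<bar>rho_m_hat fm n (\<lambda>i. max (V (Z i \<omega>)) 0) - rho_m_hat fm n (\<lambda>i. max (U (Z i \<omega>)) 0)\<bar>
              \<le> Lq_norm_01 q fm * ennreal (mean \<omega> powr (1/p))"
            unfolding mean_def using qb_det[OF n fmm p] fq by blast
          also have "\<dots> \<le> Lq_norm_01 q fm * T" using A(3) \<omega> by (intro mult_left_mono) auto
          also have "\<dots> = Lq_norm_01 q fm * enn_powr (sup_norm fZ) (1 / p) * Lp_norm lborel p (\<lambda>x. V x - U x)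
                + ennreal ((- ln \<eta> / real n) powr (1 / (2 * p))) * Lq_norm_01 q fm * sup_norm (\<lambda>x. V x - U x)"
            by (simp add: T_def S_def K_def c_def distrib_left mult_ac)
          finally show "let X = (\<lambda>i. max (V (Z i \<omega>)) 0); Y = (\<lambda>i. max (U (Z i \<omega>)) 0)
           in ennreal \<bar>rho_m_hat fm n X - rho_m_hat fm n Y\<bar>
              \<le> Lq_norm_01 q fm * enn_powr (sup_norm fZ) (1 / p) * Lp_norm lborel p (\<lambda>x. V x - U x)
                + ennreal ((- ln \<eta> / real n) powr (1 / (2 * p)))
                    * Lq_norm_01 q fm * sup_norm (\<lambda>x. V x - U x)"
            unfolding Let_def .
        qed
        then show ?thesis using A(1,2) by blast
      qed
    qed
  qed
qed

end
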